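(* Let $T>0$, $N=2$, $1<M<2$. Consider minimizing $\mathbb V(T)=\frac12(\xi_1(T)^2+\xi_2(T)^2)$ over $\alpha\in\mathcal U_M$, where $\dot\xi_i=-\xi_i+(1-\alpha_i)\bar\xi$, $\bar\xi=\frac12(\xi_1+\xi_2)$, with $\bar\xi(0)>0$ and $\xi_1(0)>\xi_2(0)$. Let $\alpha$ be an optimal control whose trajectory satisfies $\xi_1(t)\ge\xi_2(t)$ for all $t$, and let $(\lambda_1,\lambda_2)$ be the corresponding covectors given by the Pontryagin maximum principle: $$\dot\lambda_1=\tfrac{1+\alpha_1}{2}\lambda_1-\tfrac{1-\alpha_2}{2}\lambda_2,\quad \dot\lambda_2=\tfrac{1+\alpha_2}{2}\lambda_2-\tfrac{1-\alpha_1}{2}\lambda_1,\quad \lambda(T)=(\xi_1(T),\xi_2(T)),$$ and for almost every $t$, $\alpha(t)$ minimizes $a\mapsto-\bar\xi(t)(a_1\lambda_1(t)+a_2\lambda_2(t))$ over $a\in[0,1]^2$, $a_1+a_2\le M$. Then: (i) if $\lambda_2(T)>0$, then $\lambda_1(t)>0$ and $\lambda_2(t)>0$ for all $t\in[0,T]$; (ii) if $\lambda_2(T)=0$, then $\lambda_1(t)>0$ and $\lambda_2(t)=0$ for all $t\in[0,T]$; (iii) if $\lambda_2(T)<0$, then $\lambda_2(t)<0$ for all $t\in[0,T]$.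
   Context: $\mathcal U_M$ is the set of measurable $\alpha:[0,T]\to[0,1]^2$ with $\alpha_1+\alpha_2\le M$. *)

theory Defs
  imports "HOL-Analysis.Analysis"
begin

definition U_M :: "real \<Rightarrow> real \<Rightarrow> (real \<Rightarrow> real \<times> real) set" where
  "U_M T M = {\<alpha>. \<alpha> \<in> borel_measurable (restrict_space lebesgue {0..T}) \<and>
     (\<forall>t\<in>{0..T}. 0 \<le> fst (\<alpha> t) \<and> fst (\<alpha> t) \<le> 1 \<and> 0 \<le> snd (\<alpha> t) \<and> snd (\<alpha> t) \<le> 1
        \<and> fst (\<alpha> t) + snd (\<alpha> t) \<le> M)}"

definition xibar :: "real \<times> real \<Rightarrow> real" where
  "xibar x = (fst x + snd x) / 2"

definition dyn :: "real \<times> real \<Rightarrow> real \<times> real \<Rightarrow> real \<times> real" where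
  "dyn a x = (- fst x + (1 - fst a) * xibar x, - snd x + (1 - snd a) * xibar x)"

definition adj :: "real \<times> real \<Rightarrow> real \<times> real \<Rightarrow> real \<times> real" where
  "adj a l = ((1 + fst a) / 2 * fst l - (1 - snd a) / 2 * snd l,
              (1 + snd a) / 2 * snd l - (1 - fst a) / 2 * fst l)"

text \<open>Caratheodory (absolutely continuous / integral-form) solution on [0,T].\<close>
definition solves :: "real \<Rightarrow> (real \<times> real \<Rightarrow> real \<times> real \<Rightarrow> real \<times> real)
    \<Rightarrow> (real \<Rightarrow> real \<times> real) \<Rightarrow> (real \<Rightarrow> real \<times> real) \<Rightarrow> bool" where
  "solves T f \<alpha> x \<longleftrightarrow> continuous_on {0..T} x \<and>
     (\<forall>t\<in>{0..T}. ((\<lambda>s. f (\<alpha> s) (x s)) has_integral (x t - x 0)) {0..t})"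

definition cost :: "real \<times> real \<Rightarrow> real" where
  "cost x = (fst x ^ 2 + snd x ^ 2) / 2"

definition optimal :: "real \<Rightarrow> real \<Rightarrow> (real \<Rightarrow> real \<times> real) \<Rightarrow> (real \<Rightarrow> real \<times> real) \<Rightarrow> bool" where
  "optimal T M \<alpha> \<xi> \<longleftrightarrow> \<alpha> \<in> U_M T M \<and> solves T dyn \<alpha> \<xi> \<and>
     (\<forall>\<beta> \<eta>. \<beta> \<in> U_M T M \<and> solves T dyn \<beta> \<eta> \<and> \<eta> 0 = \<xi> 0 \<longrightarrow> cost (\<xi> T) \<le> cost (\<eta> T))"

end

theory Submission
  imports Defs
begin

lemma AE_negl:
  assumes "AE x in lebesgue. P x"
  obtains N where "negligible N" "\<And>x. x \<notin> N \<Longrightarrow> P x"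
proof -
  from assms obtain N where N: "{x \<in> space lebesgue. \<not> P x} \<subseteq> N" "emeasure lebesgue N = 0" "N \<in> sets lebesgue"
    by (rule AE_E)
  have "negligible N" using N by (simp add: negligible_iff_null_sets null_setsI)
  moreover have "\<And>x. x \<notin> N \<Longrightarrow> P x" using N(1) by auto
  ultimately show ?thesis using that by blast
qed

lemma core_B:
  fixes y g :: "real \<Rightarrow> real"
  assumes "p \<le> q" "q - p \<le> 1/2" "continuous_on {p..q} y"
    and I: "\<And>t. t\<in>{p..q} \<Longrightarrow> (g has_integral (y q - y t)) {t..q}"
    and N: "negligible N" and B: "\<And>s. s\<in>{p..q} - N \<Longrightarrow> \<bar>g s\<bar> \<le> \<bar>y s\<bar>" and "y q = 0"
  shows "\<forall>t\<in>{p..q}. y t = 0"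
proof -
  have "continuous_on {p..q} (\<lambda>t. \<bar>y t\<bar>)" using assms(3) by (intro continuous_intros)
  then obtain v where v: "v \<in> {p..q}" "\<And>t. t\<in>{p..q} \<Longrightarrow> \<bar>y t\<bar> \<le> \<bar>y v\<bar>"
    using continuous_attains_sup[of "{p..q}" "\<lambda>t. \<bar>y t\<bar>"] assms(1) by auto
  define g' where "g' = (\<lambda>s. if s \<in> N then 0 else g s)"
  have "(g' has_integral (y q - y v)) {v..q}"
    by (rule has_integral_spike[OF N _ I[OF v(1)]]) (auto simp: g'_def)
  moreover have "\<And>s. s \<in> {v..q} - {} \<Longrightarrow> norm (g' s) \<le> \<bar>y v\<bar>"
  proof -
    fix s assume s: "s \<in> {v..q} - {}"
    then have "s \<in> {p..q}" using v by auto
    then show "norm (g' s) \<le> \<bar>y v\<bar>" using B[of s] v(2)[of s] by (auto simp: g'_def)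
  qed
  ultimately have "norm (y q - y v) \<le> \<bar>y v\<bar> * measure lborel {v..q}"
    by (intro has_integral_bound_real) auto
  moreover have "measure lborel {v..q} = q - v" using v by simp
  ultimately have "\<bar>y v\<bar> \<le> \<bar>y v\<bar> * (q - v)" using \<open>y q = 0\<close> by simp
  also have "\<dots> \<le> \<bar>y v\<bar> * (1/2)" using v assms(2) by (intro mult_left_mono) auto
  finally have "\<bar>y v\<bar> = 0" by simp
  then show ?thesis using v(2) by fastforce
qed

lemma core_A:
  fixes y g :: "real \<Rightarrow> real"
  assumes "p < q" "q - p \<le> 1/2" "continuous_on {p..q} y"
    and I: "\<And>t. t\<in>{p..q} \<Longrightarrow> (g has_integral (y t - y p)) {p..t}"
    and N: "negligible N" and B: "\<And>s. s\<in>{p..q} - N \<Longrightarrow> y s < 0 \<Longrightarrow> g s \<ge> y s"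
    and "y p \<ge> 0" and neg: "\<And>t. t\<in>{p<..q} \<Longrightarrow> y t < 0"
  shows False
proof -
  obtain v where v: "v \<in> {p..q}" "\<And>t. t\<in>{p..q} \<Longrightarrow> y v \<le> y t"
    using continuous_attains_inf[of "{p..q}" y] assms(1,3) by auto
  define m where "m = y v"
  have "m < 0" using v(2)[of q] neg[of q] assms(1) by (auto simp: m_def)
  have "v \<noteq> p" using \<open>m < 0\<close> \<open>y p \<ge> 0\<close> by (auto simp: m_def)
  with v have vp: "p < v" by auto
  define g' where "g' = (\<lambda>s. if s \<in> N \<union> {p} then m else g s)"
  have "(g' has_integral (y v - y p)) {p..v}"
    by (rule has_integral_spike[OF _ _ I[OF v(1)], where S="N \<union> {p}"]) (auto simp: g'_def N)
  moreover have "((\<lambda>_. m) has_integral (measure lborel {p..v} *\<^sub>R m)) {p..v}" by blast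
  moreover have "\<And>s. s \<in> {p..v} \<Longrightarrow> m \<le> g' s"
  proof -
    fix s assume s: "s \<in> {p..v}"
    show "m \<le> g' s"
    proof (cases "s \<in> N \<union> {p}")
      case True then show ?thesis by (simp add: g'_def)
    next
      case False
      then have "s \<in> {p<..q}" "s \<in> {p..q} - N" using s v by auto
      then have "g s \<ge> y s" using B neg by auto
      moreover have "y s \<ge> m" using v(2)[of s] s v unfolding m_def by auto
      ultimately show ?thesis using False by (simp add: g'_def)
    qed
  qed
  ultimately have "measure lborel {p..v} *\<^sub>R m \<le> y v - y p" by (metis has_integral_le)
  then have "(v - p) * m \<le> m - y p" using vp by (simp add: m_def)
  moreover have "(1/2) * m \<le> (v - p) * m" using \<open>m < 0\<close> v assms(2) by (intro mult_right_mono_neg) auto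
  ultimately show False using \<open>m < 0\<close> \<open>y p \<ge> 0\<close> by linarith
qed

lemma lemA:
  fixes y g :: "real \<Rightarrow> real"
  assumes C: "continuous_on {0..T} y"
    and I: "\<And>t u. 0 \<le> t \<Longrightarrow> t \<le> u \<Longrightarrow> u \<le> T \<Longrightarrow> (g has_integral (y u - y t)) {t..u}"
    and N: "negligible N" and B: "\<And>s. s\<in>{0..T} - N \<Longrightarrow> y s < 0 \<Longrightarrow> g s \<ge> y s"
    and "y T < 0" and "0 \<le> T"
  shows "\<forall>t\<in>{0..T}. y t < 0"
proof (rule ccontr)
  assume contra: "\<not> ?thesis"
  define S where "S = {0..T} \<inter> y -` {0..}"
  have ne: "S \<noteq> {}" using contra by (auto simp: S_def not_less)
  have bd: "bdd_above S" by (auto simp: S_def bdd_above_def)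
  have cl: "closed S" unfolding S_def by (rule continuous_closed_preimage[OF C]) auto
  define t1 where "t1 = Sup S"
  have t1S: "t1 \<in> S" using closed_contains_Sup[OF ne bd cl] by (simp add: t1_def)
  then have t1: "0 \<le> t1" "t1 \<le> T" "y t1 \<ge> 0" by (auto simp: S_def)
  then have "t1 < T" using \<open>y T < 0\<close> by (cases "t1 = T") auto
  have after: "y t < 0" if "t \<in> {t1<..T}" for t
  proof (rule ccontr)
    assume "\<not> y t < 0"
    then have "t \<in> S" using that t1 by (auto simp: S_def)
    then have "t \<le> t1" unfolding t1_def using bd by (rule cSup_upper)
    then show False using that by auto
  qed
  define q where "q = min T (t1 + 1/2)"
  show False
  proof (rule core_A[of t1 q y g N])
    show "t1 < q" using \<open>t1 < T\<close> by (simp add: q_def)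
    show "q - t1 \<le> 1/2" unfolding q_def by linarith
    show "continuous_on {t1..q} y" using C by (rule continuous_on_subset) (auto simp: q_def t1)
    show "(g has_integral (y t - y t1)) {t1..t}" if "t \<in> {t1..q}" for t
      using I[of t1 t] that t1 by (auto simp: q_def)
    show "negligible N" by (fact N)
    show "g s \<ge> y s" if "s \<in> {t1..q} - N" "y s < 0" for s
      using B[of s] that t1 by (auto simp: q_def)
    show "0 \<le> y t1" by (fact t1(3))
    show "y t < 0" if "t \<in> {t1<..q}" for t using after[of t] that by (auto simp: q_def)
  qed
qed

lemma lemB:
  fixes y g :: "real \<Rightarrow> real"
  assumes C: "continuous_on {0..b} y"
    and I: "\<And>t u. 0 \<le> t \<Longrightarrow> t \<le> u \<Longrightarrow> u \<le> b \<Longrightarrow> (g has_integral (y u - y t)) {t..u}"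
    and N: "negligible N" and "c > 0"
    and B: "\<And>s. s\<in>{0..b} - N \<Longrightarrow> \<bar>y s\<bar> < c \<Longrightarrow> \<bar>g s\<bar> \<le> \<bar>y s\<bar>"
    and yb: "y b = 0" and "0 \<le> b"
  shows "\<forall>t\<in>{0..b}. y t = 0"
proof (rule ccontr)
  assume contra: "\<not> ?thesis"
  define S where "S = {t\<in>{0..b}. y t \<noteq> 0}"
  have ne: "S \<noteq> {}" using contra by (auto simp: S_def)
  have bd: "bdd_above S" by (auto simp: S_def bdd_above_def)
  define t1 where "t1 = Sup S"
  have t1b: "t1 \<le> b" unfolding t1_def using ne by (intro cSup_least) (auto simp: S_def)
  obtain s0 where "s0 \<in> S" using ne by auto
  then have "s0 \<le> t1" unfolding t1_def using bd by (rule cSup_upper)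
  then have t10: "0 \<le> t1" using \<open>s0 \<in> S\<close> by (auto simp: S_def)
  have after: "y t = 0" if "t \<in> {t1<..b}" for t
  proof (rule ccontr)
    assume "y t \<noteq> 0"
    then have "t \<in> S" using that t10 by (auto simp: S_def)
    then have "t \<le> t1" unfolding t1_def using bd by (rule cSup_upper)
    then show False using that by auto
  qed
  have yt1: "y t1 = 0"
  proof (cases "t1 = b")
    case True then show ?thesis using yb by simp
  next
    case False
    then have "t1 < b" using t1b by simp
    define Z where "Z = {0..b} \<inter> y -` {0}"
    have cl: "closed Z" unfolding Z_def by (rule continuous_closed_preimage[OF C]) auto
    have "{t1<..b} \<subseteq> Z" using after t10 by (auto simp: Z_def)
    then have "closure {t1<..b} \<subseteq> Z" using cl by (rule closure_minimal)
    then have "t1 \<in> Z" using \<open>t1 < b\<close> by auto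
    then show ?thesis by (simp add: Z_def)
  qed
  have "t1 \<in> {0..b}" using t10 t1b by simp
  then obtain d where d: "d > 0" "\<And>x'. x' \<in> {0..b} \<Longrightarrow> dist x' t1 < d \<Longrightarrow> dist (y x') (y t1) < c"
    using C \<open>c > 0\<close> unfolding continuous_on_iff by metis
  define e where "e = min d (1/2)"
  have "e > 0" using d by (simp add: e_def)
  then have "t1 - e < Sup S" by (simp add: t1_def)
  then obtain t0 where t0: "t0 \<in> S" "t1 - e < t0" using less_cSup_iff[OF ne bd] by auto
  have "t0 \<le> t1" unfolding t1_def using bd t0(1) by (simp add: cSup_upper)
  have "t0 \<noteq> t1" using t0(1) yt1 by (auto simp: S_def)
  have t0b: "0 \<le> t0" using t0(1) by (auto simp: S_def)
  have "\<forall>t\<in>{t0..t1}. y t = 0"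
  proof (rule core_B[of t0 t1 y g N])
    show "t0 \<le> t1" by fact
    show "t1 - t0 \<le> 1/2" using t0 by (simp add: e_def)
    show "continuous_on {t0..t1} y" using C by (rule continuous_on_subset) (use t0b t1b in auto)
    show "(g has_integral (y t1 - y t)) {t..t1}" if "t \<in> {t0..t1}" for t
      using I[of t t1] that t0b t1b by auto
    show "negligible N" by (fact N)
    show "\<bar>g s\<bar> \<le> \<bar>y s\<bar>" if s: "s \<in> {t0..t1} - N" for s
    proof -
      have "s \<in> {0..b}" using s t0b t1b by auto
      moreover have "dist s t1 < d" using s t0 \<open>t0 \<le> t1\<close> by (auto simp: e_def dist_real_def)
      ultimately have "\<bar>y s\<bar> < c" using d(2)[of s] yt1 by (simp add: dist_real_def)
      then show ?thesis using B[of s] s t0b t1b by auto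
    qed
    show "y t1 = 0" by fact
  qed
  then have "y t0 = 0" using \<open>t0 \<le> t1\<close> by auto
  then show False using t0(1) by (simp add: S_def)
qed

lemma int_rel:
  fixes y g :: "real \<Rightarrow> real"
  assumes I: "\<forall>t\<in>{0..T}. (g has_integral (y t - y 0)) {0..t}"
    and "0 \<le> t" "t \<le> u" "u \<le> T"
  shows "(g has_integral (y u - y t)) {t..u}"
proof -
  have "g integrable_on {0..u}" using I assms by auto
  then have "g integrable_on {t..u}" by (rule integrable_subinterval_real) (use assms in auto)
  then obtain J where J: "(g has_integral J) {t..u}" by blast
  have "(g has_integral ((y t - y 0) + J)) {0..u}"
    by (rule has_integral_combine[OF \<open>0 \<le> t\<close> \<open>t \<le> u\<close> _ J]) (use I assms in auto)
  moreover have "(g has_integral (y u - y 0)) {0..u}" using I assms by auto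
  ultimately have "(y t - y 0) + J = y u - y 0" by (rule has_integral_unique)
  then have "J = y u - y t" by simp
  then show ?thesis using J by simp
qed

lemma mp_arith:
  fixes x w l1 l2 M :: real
  assumes "0\<le>x" "x\<le>1" "0\<le>w" "w\<le>1" "x+w\<le>M" "1<M" "0<l1" "l2<l1"
    and opt: "\<And>a1 a2. 0\<le>a1 \<Longrightarrow> a1\<le>1 \<Longrightarrow> 0\<le>a2 \<Longrightarrow> a2\<le>1 \<Longrightarrow> a1+a2\<le>M \<Longrightarrow> a1*l1+a2*l2 \<le> x*l1 + w*l2"
  shows "x = 1"
proof (rule ccontr)
  assume "x \<noteq> 1"
  then have x1: "x < 1" using assms by simp
  show False
  proof (cases "w \<ge> 1 - x")
    case True
    have "1*l1 + (w - (1-x))*l2 \<le> x*l1 + w*l2" using True assms by (intro opt) auto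
    then have "(1-x)*(l1 - l2) \<le> 0" by (simp add: algebra_simps)
    moreover have "(1-x)*(l1 - l2) > 0" using x1 assms by (intro mult_pos_pos) auto
    ultimately show False by simp
  next
    case False
    have "1*l1 + 0*l2 \<le> x*l1 + w*l2" using assms by (intro opt) auto
    moreover have "w*l2 \<le> w*l1" using assms by (intro mult_left_mono) auto
    moreover have "(x+w)*l1 < 1*l1" using False assms by (intro mult_strict_right_mono) auto
    ultimately show False by (simp add: algebra_simps)
  qed
qed

theorem proposition7:
  fixes T M :: real and \<alpha> \<xi> lam :: "real \<Rightarrow> real \<times> real"
  assumes "T > 0" and "1 < M" and "M < 2"
    and "xibar (\<xi> 0) > 0" and "fst (\<xi> 0) > snd (\<xi> 0)"
    and "optimal T M \<alpha> \<xi>"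
    and "\<forall>t\<in>{0..T}. fst (\<xi> t) \<ge> snd (\<xi> t)"
    and "solves T adj \<alpha> lam" and "lam T = \<xi> T"
    and "AE t in lebesgue. t \<in> {0..T} \<longrightarrow>
          (\<forall>a1 a2. 0 \<le> a1 \<and> a1 \<le> 1 \<and> 0 \<le> a2 \<and> a2 \<le> 1 \<and> a1 + a2 \<le> M \<longrightarrow>
             - xibar (\<xi> t) * (fst (\<alpha> t) * fst (lam t) + snd (\<alpha> t) * snd (lam t))
             \<le> - xibar (\<xi> t) * (a1 * fst (lam t) + a2 * snd (lam t)))"
  shows "(snd (lam T) > 0 \<longrightarrow> (\<forall>t\<in>{0..T}. fst (lam t) > 0 \<and> snd (lam t) > 0))
       \<and> (snd (lam T) = 0 \<longrightarrow> (\<forall>t\<in>{0..T}. fst (lam t) > 0 \<and> snd (lam t) = 0))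
       \<and> (snd (lam T) < 0 \<longrightarrow> (\<forall>t\<in>{0..T}. snd (lam t) < 0))"
proof -
  define l1 where "l1 = (\<lambda>s. fst (lam s))"
  define l2 where "l2 = (\<lambda>s. snd (lam s))"
  define a1 where "a1 = (\<lambda>s. fst (\<alpha> s))"
  define a2 where "a2 = (\<lambda>s. snd (\<alpha> s))"
  define xb where "xb = (\<lambda>s. xibar (\<xi> s))"
  define g1 where "g1 = (\<lambda>s. (1 + a1 s)/2 * l1 s - (1 - a2 s)/2 * l2 s)"
  define g2 where "g2 = (\<lambda>s. (1 + a2 s)/2 * l2 s - (1 - a1 s)/2 * l1 s)"
  define gx where "gx = (\<lambda>s. - (a1 s + a2 s)/2 * xb s)"
  define d where "d = (\<lambda>s. l1 s - l2 s)"
  have T0: "0 \<le> T" using assms(1) by simp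
  have opt: "\<alpha> \<in> U_M T M" "solves T dyn \<alpha> \<xi>" using assms(6) by (auto simp: optimal_def)
  have ab: "0 \<le> a1 t" "a1 t \<le> 1" "0 \<le> a2 t" "a2 t \<le> 1" "a1 t + a2 t \<le> M" if "t \<in> {0..T}" for t
    using opt(1) that by (auto simp: U_M_def a1_def a2_def)
  have lamC: "continuous_on {0..T} lam" and lamI: "\<forall>t\<in>{0..T}. ((\<lambda>s. adj (\<alpha> s) (lam s)) has_integral (lam t - lam 0)) {0..t}"
    using assms(8) by (auto simp: solves_def)
  have xiC: "continuous_on {0..T} \<xi>" and xiI: "\<forall>t\<in>{0..T}. ((\<lambda>s. dyn (\<alpha> s) (\<xi> s)) has_integral (\<xi> t - \<xi> 0)) {0..t}"
    using opt(2) by (auto simp: solves_def)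
  have l1C: "continuous_on {0..T} l1" unfolding l1_def using lamC by (intro continuous_intros)
  have l2C: "continuous_on {0..T} l2" unfolding l2_def using lamC by (intro continuous_intros)
  have xbC: "continuous_on {0..T} xb" unfolding xb_def xibar_def using xiC by (intro continuous_intros) auto
  have dC: "continuous_on {0..T} d" unfolding d_def using l1C l2C by (intro continuous_intros)
  have I1: "\<forall>t\<in>{0..T}. (g1 has_integral (l1 t - l1 0)) {0..t}"
  proof
    fix t assume "t \<in> {0..T}"
    then have "((fst \<circ> (\<lambda>s. adj (\<alpha> s) (lam s))) has_integral fst (lam t - lam 0)) {0..t}"
      using lamI by (intro has_integral_linear bounded_linear_fst) auto
    moreover have "fst \<circ> (\<lambda>s. adj (\<alpha> s) (lam s)) = g1"
      by (auto simp: g1_def adj_def l1_def l2_def a1_def a2_def)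
    ultimately show "(g1 has_integral (l1 t - l1 0)) {0..t}" by (simp add: l1_def)
  qed
  have I2: "\<forall>t\<in>{0..T}. (g2 has_integral (l2 t - l2 0)) {0..t}"
  proof
    fix t assume "t \<in> {0..T}"
    then have "((snd \<circ> (\<lambda>s. adj (\<alpha> s) (lam s))) has_integral snd (lam t - lam 0)) {0..t}"
      using lamI by (intro has_integral_linear bounded_linear_snd) auto
    moreover have "snd \<circ> (\<lambda>s. adj (\<alpha> s) (lam s)) = g2"
      by (auto simp: g2_def adj_def l1_def l2_def a1_def a2_def)
    ultimately show "(g2 has_integral (l2 t - l2 0)) {0..t}" by (simp add: l2_def)
  qed
  have blx: "bounded_linear xibar" unfolding xibar_def
    using bounded_linear_compose[OF bounded_linear_divide[of 2] bounded_linear_add[OF bounded_linear_fst bounded_linear_snd]] by simp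
  have Ix: "\<forall>t\<in>{0..T}. (gx has_integral (xb t - xb 0)) {0..t}"
  proof
    fix t assume "t \<in> {0..T}"
    then have "((xibar \<circ> (\<lambda>s. dyn (\<alpha> s) (\<xi> s))) has_integral xibar (\<xi> t - \<xi> 0)) {0..t}"
      using xiI by (intro has_integral_linear blx) auto
    moreover have "xibar \<circ> (\<lambda>s. dyn (\<alpha> s) (\<xi> s)) = gx"
      by (auto simp: gx_def dyn_def xibar_def xb_def a1_def a2_def field_simps)
    moreover have "xibar (\<xi> t - \<xi> 0) = xb t - xb 0" by (simp add: xb_def xibar_def field_simps)
    ultimately show "(gx has_integral (xb t - xb 0)) {0..t}" by simp
  qed
  have Id: "\<forall>t\<in>{0..T}. (d has_integral (d t - d 0)) {0..t}"
  proof
    fix t assume "t \<in> {0..T}"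
    then have "((\<lambda>s. g1 s - g2 s) has_integral ((l1 t - l1 0) - (l2 t - l2 0))) {0..t}"
      using I1 I2 by (intro has_integral_diff) auto
    moreover have "(\<lambda>s. g1 s - g2 s) = d" by (auto simp: g1_def g2_def d_def field_simps)
    moreover have "(l1 t - l1 0) - (l2 t - l2 0) = d t - d 0" by (simp add: d_def)
    ultimately show "(d has_integral (d t - d 0)) {0..t}" by simp
  qed

  have rel: "(g has_integral (y u - y t)) {t..u}"
    if "\<forall>t\<in>{0..T}. (g has_integral (y t - y 0)) {0..t}" "0 \<le> t" "t \<le> u" "u \<le> T"
    for g y :: "real \<Rightarrow> real" and t u
    using int_rel[OF that] .
  have xbpos: "\<forall>t\<in>{0..T}. xb t > 0"
  proof (rule ccontr)
    assume "\<not> (\<forall>t\<in>{0..T}. xb t > 0)"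
    then obtain t0 where t0: "t0 \<in> {0..T}" "xb t0 \<le> 0" by (auto simp: not_less)
    have "continuous_on {0..t0} (\<lambda>s. - xb s)" using xbC t0 by (intro continuous_intros continuous_on_subset[OF xbC]) auto
    then obtain z where z: "0 \<le> z" "z \<le> t0" "- xb z = 0"
      using IVT'[of "\<lambda>s. - xb s" 0 0 t0] t0 assms(4) by (auto simp: xb_def)
    have "\<forall>t\<in>{0..z}. xb t = 0"
    proof (rule lemB[of z xb gx "{}" 1])
      show "continuous_on {0..z} xb" by (rule continuous_on_subset[OF xbC]) (use z t0 in auto)
      show "(gx has_integral (xb u - xb t)) {t..u}" if "0 \<le> t" "t \<le> u" "u \<le> z" for t u
        using rel[OF Ix that(1,2)] that z t0 by auto
      show "\<bar>gx s\<bar> \<le> \<bar>xb s\<bar>" if "s \<in> {0..z} - {}" "\<bar>xb s\<bar> < 1" for s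
      proof -
        have s: "s \<in> {0..T}" using that z t0 by auto
        have "\<bar>(a1 s + a2 s)/2\<bar> \<le> 1" using ab[OF s] assms(3) by auto
        then have "\<bar>(a1 s + a2 s)/2\<bar> * \<bar>xb s\<bar> \<le> 1 * \<bar>xb s\<bar>" by (intro mult_right_mono) auto
        moreover have "\<bar>gx s\<bar> = \<bar>(a1 s + a2 s)/2\<bar> * \<bar>xb s\<bar>" by (simp add: gx_def abs_mult abs_minus_commute add.commute)
        ultimately show ?thesis by simp
      qed
    qed (use z in auto)
    then show False using z assms(4) by (auto simp: xb_def)
  qed

  have lT: "l1 T = fst (\<xi> T)" "l2 T = snd (\<xi> T)" using assms(9) by (auto simp: l1_def l2_def)
  have TT: "T \<in> {0..T}" using T0 by simp
  have sumT: "l1 T + l2 T > 0" using xbpos TT lT by (auto simp: xb_def xibar_def)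
  have dT: "d T \<ge> 0" using assms(7) TT lT by (auto simp: d_def)
  have Irel: "(g has_integral (y u - y t)) {t..u}"
    if "\<forall>t\<in>{0..T}. (g has_integral (y t - y 0)) {0..t}" "0 \<le> t" "t \<le> u" "u \<le> T"
    for g y :: "real \<Rightarrow> real" and t u
    using int_rel[OF that] .
  have dpos: "\<forall>t\<in>{0..T}. d t > 0" if "d T > 0"
  proof -
    have "\<forall>t\<in>{0..T}. - d t < 0"
    proof (rule lemA[of T "\<lambda>s. - d s" "\<lambda>s. - d s" "{}"])
      show "continuous_on {0..T} (\<lambda>s. - d s)" using dC by (intro continuous_intros)
      show "((\<lambda>s. - d s) has_integral (- d u - - d t)) {t..u}" if "0 \<le> t" "t \<le> u" "u \<le> T" for t u
        using has_integral_neg[OF Irel[OF Id that]] by simp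
    qed (use that T0 in auto)
    then show ?thesis by auto
  qed
  have dzero: "\<forall>t\<in>{0..T}. d t = 0" if "d T = 0"
  proof (rule lemB[of T d d "{}" 1])
    show "(d has_integral (d u - d t)) {t..u}" if "0 \<le> t" "t \<le> u" "u \<le> T" for t u
      using Irel[OF Id that] .
  qed (use that T0 dC in auto)
  have dnn: "\<forall>t\<in>{0..T}. d t \<ge> 0"
    using dpos dzero dT by (cases "d T = 0") (auto simp: less_imp_le)
  obtain N0 where N0: "negligible N0" and N0P: "\<And>t. t \<notin> N0 \<Longrightarrow> t \<in> {0..T} \<longrightarrow>
          (\<forall>a1 a2. 0 \<le> a1 \<and> a1 \<le> 1 \<and> 0 \<le> a2 \<and> a2 \<le> 1 \<and> a1 + a2 \<le> M \<longrightarrow>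
             - xibar (\<xi> t) * (fst (\<alpha> t) * fst (lam t) + snd (\<alpha> t) * snd (lam t))
             \<le> - xibar (\<xi> t) * (a1 * fst (lam t) + a2 * snd (lam t)))"
    using AE_negl[OF assms(10)] by metis
  have mp: "a1 s = 1" if s: "s \<in> {0..T} - N0" and pos: "l1 s > 0" "l1 s > l2 s" for s
  proof (rule mp_arith[of "a1 s" "a2 s" M "l1 s" "l2 s"])
    show "0 \<le> a1 s" "a1 s \<le> 1" "0 \<le> a2 s" "a2 s \<le> 1" "a1 s + a2 s \<le> M" using ab s by auto
    show "1 < M" "0 < l1 s" "l2 s < l1 s" using assms(2) pos by auto
    fix b1 b2 :: real assume b: "0 \<le> b1" "b1 \<le> 1" "0 \<le> b2" "b2 \<le> 1" "b1 + b2 \<le> M"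
    have "- xb s * (a1 s * l1 s + a2 s * l2 s) \<le> - xb s * (b1 * l1 s + b2 * l2 s)"
      using N0P[of s] s b by (auto simp: xb_def a1_def a2_def l1_def l2_def)
    moreover have "xb s > 0" using xbpos s by auto
    ultimately show "b1 * l1 s + b2 * l2 s \<le> a1 s * l1 s + a2 s * l2 s" by simp
  qed

  have l1eq: "l1 t = l2 t + d t" for t by (simp add: d_def)
  have case1: "\<forall>t\<in>{0..T}. l1 t > 0 \<and> l2 t > 0" if "l2 T > 0"
  proof -
    have "\<forall>t\<in>{0..T}. - l2 t < 0"
    proof (rule lemA[of T "\<lambda>s. - l2 s" "\<lambda>s. - g2 s" "{}"])
      show "continuous_on {0..T} (\<lambda>s. - l2 s)" using l2C by (intro continuous_intros)
      show "((\<lambda>s. - g2 s) has_integral (- l2 u - - l2 t)) {t..u}" if "0 \<le> t" "t \<le> u" "u \<le> T" for t u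
        using has_integral_neg[OF Irel[OF I2 that]] by simp
      show "- l2 s \<le> - g2 s" if s: "s \<in> {0..T} - {}" "- l2 s < 0" for s
      proof -
        have "l1 s \<ge> 0" using l1eq[of s] dnn s by force
        then have "(1 - a1 s)/2 * l1 s \<ge> 0" using ab[of s] s by (intro mult_nonneg_nonneg) auto
        moreover have "(1 + a2 s)/2 * l2 s \<le> 1 * l2 s" using ab[of s] s by (intro mult_right_mono) auto
        ultimately show ?thesis by (simp add: g2_def)
      qed
    qed (use that T0 in auto)
    then show ?thesis using l1eq dnn by force
  qed
  have case2: "\<forall>t\<in>{0..T}. l1 t > 0 \<and> l2 t = 0" if "l2 T = 0"
  proof -
    have "d T > 0" using that sumT by (simp add: d_def)
    then have dp: "\<forall>t\<in>{0..T}. d t > 0" by (rule dpos)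
    obtain v where v: "v \<in> {0..T}" "\<And>t. t \<in> {0..T} \<Longrightarrow> d v \<le> d t"
      using continuous_attains_inf[of "{0..T}" d] dC T0 by auto
    have "d v > 0" using dp v by auto
    have "\<forall>t\<in>{0..T}. l2 t = 0"
    proof (rule lemB[of T l2 g2 N0 "d v"])
      show "(g2 has_integral (l2 u - l2 t)) {t..u}" if "0 \<le> t" "t \<le> u" "u \<le> T" for t u
        using Irel[OF I2 that] .
      show "\<bar>g2 s\<bar> \<le> \<bar>l2 s\<bar>" if s: "s \<in> {0..T} - N0" "\<bar>l2 s\<bar> < d v" for s
      proof -
        have "d s \<ge> d v" "d s > 0" using v dp s by auto
        then have "l1 s > 0" "l1 s > l2 s" using l1eq[of s] s by auto
        then have "a1 s = 1" using mp s by auto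
        then have "g2 s = (1 + a2 s)/2 * l2 s" by (simp add: g2_def)
        moreover have "\<bar>(1 + a2 s)/2\<bar> \<le> 1" using ab[of s] s by auto
        moreover have "\<bar>(1 + a2 s)/2\<bar> * \<bar>l2 s\<bar> \<le> 1 * \<bar>l2 s\<bar>"
          using calculation(2) by (intro mult_right_mono) auto
        ultimately show ?thesis by (metis abs_mult mult_1)
      qed
    qed (use that T0 l2C \<open>d v > 0\<close> N0 in auto)
    then show ?thesis using l1eq dp by force
  qed
  have case3: "\<forall>t\<in>{0..T}. l2 t < 0" if "l2 T < 0"
  proof (rule lemA[of T l2 g2 N0])
    show "(g2 has_integral (l2 u - l2 t)) {t..u}" if "0 \<le> t" "t \<le> u" "u \<le> T" for t u
      using Irel[OF I2 that] .
    have "d T > 0" using that sumT by (simp add: d_def)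
    then have dp: "\<forall>t\<in>{0..T}. d t > 0" by (rule dpos)
    show "l2 s \<le> g2 s" if s: "s \<in> {0..T} - N0" "l2 s < 0" for s
    proof (cases "l1 s > 0")
      case True
      then have "l1 s > l2 s" using s by auto
      then have "a1 s = 1" using mp s True by auto
      then have "g2 s = (1 + a2 s)/2 * l2 s" by (simp add: g2_def)
      moreover have "(1 + a2 s)/2 * l2 s \<ge> 1 * l2 s" using ab[of s] s by (intro mult_right_mono_neg) auto
      ultimately show ?thesis by simp
    next
      case False
      then have "(1 - a1 s)/2 * l1 s \<le> 0" using ab[of s] s by (intro mult_nonneg_nonpos) auto
      moreover have "(1 + a2 s)/2 * l2 s \<ge> 1 * l2 s" using ab[of s] s by (intro mult_right_mono_neg) auto
      ultimately show ?thesis by (simp add: g2_def)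
    qed
  qed (use that T0 l2C N0 in auto)
  show ?thesis using case1 case2 case3 by (simp add: l1_def l2_def)
qed

end
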